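(* Let $t>0$ and let $X\subseteq Z$ be finite subsets of $\mathbb{R}^D$. Then $\mathrm{Mag}(tZ)=\mathrm{Mag}(tX)$ if and only if $X$ and $Z$ are magnitude-equivalent at scale $t$.
   Context: For a finite set $A\subset\mathbb{R}^D$ and $t>0$, the matrix $\zeta_{tA}(x,y)=\exp(-t\|x-y\|)$ ($x,y\in A$) is invertible; $\mathbf{w}^t_A=\zeta_{tA}^{-1}\mathbb{1}$ is the weighting vector of $A$ at scale $t$ and $\mathrm{Mag}(tA)=\sum_{x\in A}\mathbf{w}^t_A(x)$. Finite $X,Y\subset\mathbb{R}^D$ are magnitude-equivalent at scale $t$ if $\{x\in X:\mathbf{w}^t_X(x)\neq0\}=\{y\in Y:\mathbf{w}^t_Y(y)\neq0\}$. *)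

theory Defs
  imports "HOL-Analysis.Analysis"
begin

text \<open>Weighting vector of a finite set A at scale t: the unique function w, supported on A,
  with (zeta_tA w)(x) = 1 for all x in A, where zeta_tA(x,y) = exp(-t * norm(x - y)).
  (Uniqueness/existence is the invertibility of the similarity matrix.)\<close>
definition weighting :: "real \<Rightarrow> 'a::euclidean_space set \<Rightarrow> 'a \<Rightarrow> real" where
  "weighting t A = (THE w. (\<forall>x\<in>A. (\<Sum>y\<in>A. exp (- t * norm (x - y)) * w y) = 1)
                           \<and> (\<forall>x. x \<notin> A \<longrightarrow> w x = 0))"

definition Mag :: "real \<Rightarrow> 'a::euclidean_space set \<Rightarrow> real" where
  "Mag t A = (\<Sum>x\<in>A. weighting t A x)"

definition mag_equiv :: "real \<Rightarrow> 'a::euclidean_space set \<Rightarrow> 'a set \<Rightarrow> bool" where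
  "mag_equiv t X Y \<longleftrightarrow> {x\<in>X. weighting t X x \<noteq> 0} = {y\<in>Y. weighting t Y y \<noteq> 0}"

end

theory Submission imports Defs "HOL-Probability.Distributions" begin


lemma poly_psd:
  fixes A :: "'a::euclidean_space set"
  assumes "finite A"
  shows "0 \<le> (\<Sum>x\<in>A. \<Sum>y\<in>A. a x * a y * (x \<bullet> y) ^ k)"
proof (induction k arbitrary: a)
  case 0
  have "(\<Sum>x\<in>A. \<Sum>y\<in>A. a x * a y * (x \<bullet> y) ^ 0) = (\<Sum>x\<in>A. a x) * (\<Sum>y\<in>A. a y)"
    by (simp add: sum_product)
  then show ?case by simp
next
  case (Suc k)
  have "(\<Sum>x\<in>A. \<Sum>y\<in>A. a x * a y * (x \<bullet> y) ^ Suc k)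
      = (\<Sum>x\<in>A. \<Sum>y\<in>A. \<Sum>b\<in>Basis. (a x * (x \<bullet> b)) * (a y * (y \<bullet> b)) * (x \<bullet> y) ^ k)"
  proof (intro sum.cong refl)
    fix x y assume "x \<in> A" "y \<in> A"
    have "(x \<bullet> y) ^ Suc k = (\<Sum>b\<in>Basis. (x \<bullet> b) * (y \<bullet> b)) * (x \<bullet> y)^k"
      by (simp add: euclidean_inner[symmetric])
    then have "a x * a y * (x \<bullet> y) ^ Suc k = (a x * a y) * ((\<Sum>b\<in>Basis. (x \<bullet> b) * (y \<bullet> b)) * (x \<bullet> y)^k)"
      by simp
    also have "\<dots> = (\<Sum>b\<in>Basis. (a x * a y) * ((x \<bullet> b) * (y \<bullet> b) * (x \<bullet> y)^k))"
      by (simp only: sum_distrib_left sum_distrib_right)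
    also have "\<dots> = (\<Sum>b\<in>Basis. (a x * (x \<bullet> b)) * (a y * (y \<bullet> b)) * (x \<bullet> y) ^ k)"
      by (intro sum.cong refl) (simp add: mult_ac)
    finally show "a x * a y * (x \<bullet> y) ^ Suc k = (\<Sum>b\<in>Basis. (a x * (x \<bullet> b)) * (a y * (y \<bullet> b)) * (x \<bullet> y) ^ k)" .
  qed
  also have "\<dots> = (\<Sum>b\<in>Basis. \<Sum>x\<in>A. \<Sum>y\<in>A. (a x * (x \<bullet> b)) * (a y * (y \<bullet> b)) * (x \<bullet> y) ^ k)"
    by (subst sum.swap) (rule sum.cong[OF refl], rule sum.swap)
  also have "\<dots> \<ge> 0"
    by (rule sum_nonneg) (rule Suc.IH)
  finally show ?case .
qed

lemma exp_psd:
  fixes A :: "'a::euclidean_space set"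
  assumes "finite A" and "c \<ge> 0"
  shows "0 \<le> (\<Sum>x\<in>A. \<Sum>y\<in>A. a x * a y * exp (c * (x \<bullet> y)))"
proof -
  have "(\<lambda>n. \<Sum>x\<in>A. \<Sum>y\<in>A. a x * a y * ((c * (x \<bullet> y)) ^ n /\<^sub>R fact n)) sums
        (\<Sum>x\<in>A. \<Sum>y\<in>A. a x * a y * exp (c * (x \<bullet> y)))"
    by (intro sums_sum sums_mult exp_converges)
  moreover have "(\<Sum>x\<in>A. \<Sum>y\<in>A. a x * a y * ((c * (x \<bullet> y)) ^ n /\<^sub>R fact n))
      = c ^ n / fact n * (\<Sum>x\<in>A. \<Sum>y\<in>A. a x * a y * (x \<bullet> y) ^ n)" for n
    by (simp add: sum_distrib_left power_mult_distrib field_simps)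
  moreover have "0 \<le> c ^ n / fact n * (\<Sum>x\<in>A. \<Sum>y\<in>A. a x * a y * (x \<bullet> y) ^ n)" for n
    using assms poly_psd by (intro mult_nonneg_nonneg) auto
  ultimately show ?thesis
    by (metis (no_types, lifting) sums_le sums_zero)
qed

lemma gauss_psd:
  fixes A :: "'a::euclidean_space set"
  assumes "finite A" and "c \<ge> 0"
  shows "0 \<le> (\<Sum>x\<in>A. \<Sum>y\<in>A. v x * v y * exp (- c * (norm (x - y))\<^sup>2))"
proof -
  have e: "exp (- c * (norm (x - y))\<^sup>2) = exp (- c * (norm x)\<^sup>2) * exp (- c * (norm y)\<^sup>2) * exp ((2*c) * (x \<bullet> y))" for x y :: 'a
  proof -
    have "(norm (x - y))\<^sup>2 = (norm x)\<^sup>2 + (norm y)\<^sup>2 - 2 * (x \<bullet> y)"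
      by (simp add: power2_norm_eq_inner inner_diff_left inner_diff_right inner_commute)
    then have "- c * (norm (x - y))\<^sup>2 = - c * ((norm x)\<^sup>2 + (norm y)\<^sup>2 - 2 * (x \<bullet> y))"
      by (simp only:)
    also have "\<dots> = - c * (norm x)\<^sup>2 + - c * (norm y)\<^sup>2 + (2*c) * (x \<bullet> y)"
      by (simp add: algebra_simps)
    finally have "- c * (norm (x - y))\<^sup>2 = - c * (norm x)\<^sup>2 + - c * (norm y)\<^sup>2 + (2*c) * (x \<bullet> y)" .
    then show ?thesis by (simp add: exp_add[symmetric])
  qed
  have "(\<Sum>x\<in>A. \<Sum>y\<in>A. v x * v y * exp (- c * (norm (x - y))\<^sup>2))
     = (\<Sum>x\<in>A. \<Sum>y\<in>A. (v x * exp (- c * (norm x)\<^sup>2)) * (v y * exp (- c * (norm y)\<^sup>2)) * exp ((2*c) * (x \<bullet> y)))"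
    unfolding e by (intro sum.cong refl) (simp add: mult_ac)
  then show ?thesis
    using exp_psd[OF assms(1), of "2*c" "\<lambda>x. v x * exp (- c * (norm x)\<^sup>2)"] assms(2)
    by simp
qed



lemma solve_pd:
  fixes A :: "'a set"
  assumes "finite A"
  shows "(\<forall>x\<in>A. \<forall>y\<in>A. K x y = K y x) \<Longrightarrow>
         (\<forall>v. (\<exists>x\<in>A. v x \<noteq> 0) \<longrightarrow> 0 < (\<Sum>x\<in>A. \<Sum>y\<in>A. v x * v y * K x y)) \<Longrightarrow>
         \<exists>w. \<forall>x\<in>A. (\<Sum>y\<in>A. K x y * w y) = (b x :: real)"
  using assms
proof (induction A arbitrary: K b rule: finite_induct)
  case empty
  then show ?case by simp
next
  case (insert a A)
  note sym = insert.prems(1) and pd = insert.prems(2)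
  define e where "e = (\<lambda>x. if x = a then 1 else (0::real))"
  have eA: "\<And>x. x \<in> A \<Longrightarrow> e x = 0" using insert.hyps by (auto simp: e_def)
  have "(\<Sum>x\<in>insert a A. \<Sum>y\<in>insert a A. e x * e y * K x y) = K a a"
    using insert.hyps by (simp add: eA cong: sum.cong) (simp add: e_def)
  moreover have "0 < (\<Sum>x\<in>insert a A. \<Sum>y\<in>insert a A. e x * e y * K x y)"
    using pd[rule_format, of e] by (auto simp: e_def)
  ultimately have kaa: "K a a > 0" by simp
  define K' where "K' = (\<lambda>x y. K x y - K x a * K a y / K a a)"
  define b' where "b' = (\<lambda>x. b x - K x a * b a / K a a)"
  have syma: "\<And>x. x \<in> A \<Longrightarrow> K x a = K a x" using sym by blast
  have sym': "\<forall>x\<in>A. \<forall>y\<in>A. K' x y = K' y x"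
  proof (intro ballI)
    fix x y assume x: "x \<in> A" and y: "y \<in> A"
    have h1: "K x y = K y x" using sym x y by blast
    show "K' x y = K' y x" unfolding K'_def h1 syma[OF x] syma[OF y] by (simp add: mult.commute)
  qed
  have pd': "\<forall>v. (\<exists>x\<in>A. v x \<noteq> 0) \<longrightarrow> 0 < (\<Sum>x\<in>A. \<Sum>y\<in>A. v x * v y * K' x y)"
  proof (intro allI impI)
    fix v :: "'a \<Rightarrow> real"
    assume nz: "\<exists>x\<in>A. v x \<noteq> 0"
    define s where "s = (\<Sum>y\<in>A. K a y * v y)"
    define p where "p = - s / K a a"
    define v' where "v' = v(a := p)"
    have v'A: "\<And>x. x \<in> A \<Longrightarrow> v' x = v x" using insert.hyps by (auto simp: v'_def)
    have s2: "(\<Sum>x\<in>A. v x * K x a) = s"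
      unfolding s_def by (intro sum.cong refl) (simp add: syma mult.commute)
    have "(\<Sum>x\<in>insert a A. \<Sum>y\<in>insert a A. v' x * v' y * K x y)
        = p * p * K a a + p * (\<Sum>y\<in>A. v y * K a y) + (\<Sum>x\<in>A. v x * p * K x a + (\<Sum>y\<in>A. v x * v y * K x y))"
    proof -
      have v'a: "v' a = p" by (simp add: v'_def)
      have "(\<Sum>y\<in>insert a A. v' x * v' y * K x y) = v' x * p * K x a + (\<Sum>y\<in>A. v' x * v y * K x y)" for x
        using insert.hyps by (simp add: v'a v'A cong: sum.cong)
      then have "(\<Sum>x\<in>insert a A. \<Sum>y\<in>insert a A. v' x * v' y * K x y)
         = (p * p * K a a + (\<Sum>y\<in>A. p * v y * K a y)) + (\<Sum>x\<in>A. v x * p * K x a + (\<Sum>y\<in>A. v x * v y * K x y))"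
        using insert.hyps by (simp add: v'a v'A cong: sum.cong)
      also have "(\<Sum>y\<in>A. p * v y * K a y) = p * (\<Sum>y\<in>A. v y * K a y)"
        by (simp add: sum_distrib_left mult.assoc)
      finally show ?thesis .
    qed
    also have "\<dots> = p * p * K a a + 2 * p * s + (\<Sum>x\<in>A. \<Sum>y\<in>A. v x * v y * K x y)"
    proof -
      have "(\<Sum>y\<in>A. v y * K a y) = s" unfolding s_def by (simp add: mult_ac)
      moreover have "(\<Sum>x\<in>A. v x * p * K x a) = p * s"
      proof -
        have "(\<Sum>x\<in>A. v x * p * K x a) = (\<Sum>x\<in>A. p * (v x * K x a))"
          by (intro sum.cong refl) (simp add: mult_ac)
        also have "\<dots> = p * (\<Sum>x\<in>A. v x * K x a)" by (rule sum_distrib_left[symmetric])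
        finally show ?thesis using s2 by simp
      qed
      ultimately show ?thesis by (simp add: sum.distrib)
    qed
    also have "\<dots> = (\<Sum>x\<in>A. \<Sum>y\<in>A. v x * v y * K x y) - s * s / K a a"
      using kaa by (simp add: p_def field_simps power2_eq_square)
    also have "\<dots> = (\<Sum>x\<in>A. \<Sum>y\<in>A. v x * v y * K' x y)"
    proof -
      have "(\<Sum>x\<in>A. \<Sum>y\<in>A. v x * v y * K' x y)
          = (\<Sum>x\<in>A. \<Sum>y\<in>A. v x * v y * K x y) - (\<Sum>x\<in>A. \<Sum>y\<in>A. (v x * K x a) * (K a y * v y) / K a a)"
      proof -
        have "(\<Sum>x\<in>A. \<Sum>y\<in>A. v x * v y * K' x y) = (\<Sum>x\<in>A. \<Sum>y\<in>A. v x * v y * K x y - (v x * K x a) * (K a y * v y) / K a a)"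
          by (intro sum.cong refl) (simp add: K'_def algebra_simps)
        then show ?thesis by (simp only: sum_subtractf)
      qed
      also have "(\<Sum>x\<in>A. \<Sum>y\<in>A. (v x * K x a) * (K a y * v y) / K a a) = (\<Sum>x\<in>A. v x * K x a) * s / K a a"
        by (simp add: s_def sum_distrib_left sum_distrib_right sum_divide_distrib) (rule sum.swap)
      finally show ?thesis using s2 by simp
    qed
    finally have eq: "(\<Sum>x\<in>insert a A. \<Sum>y\<in>insert a A. v' x * v' y * K x y) = (\<Sum>x\<in>A. \<Sum>y\<in>A. v x * v y * K' x y)" .
    have "\<exists>x\<in>insert a A. v' x \<noteq> 0" using nz v'A by auto
    with pd have "0 < (\<Sum>x\<in>insert a A. \<Sum>y\<in>insert a A. v' x * v' y * K x y)" by blast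
    with eq show "0 < (\<Sum>x\<in>A. \<Sum>y\<in>A. v x * v y * K' x y)" by simp
  qed
  obtain u where u: "\<forall>x\<in>A. (\<Sum>y\<in>A. K' x y * u y) = b' x"
    using insert.IH[OF sym' pd'] by blast
  define ua where "ua = (b a - (\<Sum>y\<in>A. K a y * u y)) / K a a"
  define w where "w = u(a := ua)"
  have wA: "\<And>x. x \<in> A \<Longrightarrow> w x = u x" using insert.hyps by (auto simp: w_def)
  have wa: "w a = ua" by (simp add: w_def)
  have "\<forall>x\<in>insert a A. (\<Sum>y\<in>insert a A. K x y * w y) = b x"
  proof
    fix x assume x: "x \<in> insert a A"
    have S: "(\<Sum>y\<in>insert a A. K x y * w y) = K x a * ua + (\<Sum>y\<in>A. K x y * u y)"
      using insert.hyps by (simp add: wA wa cong: sum.cong)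
    show "(\<Sum>y\<in>insert a A. K x y * w y) = b x"
    proof (cases "x = a")
      case True
      then show ?thesis using S kaa by (simp add: ua_def field_simps)
    next
      case False
      with x have xA: "x \<in> A" by simp
      have "b' x = (\<Sum>y\<in>A. K x y * u y) - K x a / K a a * (\<Sum>y\<in>A. K a y * u y)"
      proof -
        have "b' x = (\<Sum>y\<in>A. K x y * u y - K x a / K a a * (K a y * u y))"
          using u xA by (auto simp: K'_def algebra_simps intro!: sum.cong)
        also have "\<dots> = (\<Sum>y\<in>A. K x y * u y) - K x a / K a a * (\<Sum>y\<in>A. K a y * u y)"
          by (simp only: sum_subtractf sum_distrib_left)
        finally show ?thesis .
      qed
      then have R: "(\<Sum>y\<in>A. K x y * u y) = b x - K x a * b a / K a a + K x a / K a a * (\<Sum>y\<in>A. K a y * u y)"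
        by (simp add: b'_def)
      have "K x a * ((b a - (\<Sum>y\<in>A. K a y * u y)) / K a a) + (b x - K x a * b a / K a a + K x a / K a a * (\<Sum>y\<in>A. K a y * u y)) = b x"
        using kaa by (simp add: field_simps)
      then show ?thesis using S R by (simp add: ua_def)
    qed
  qed
  then show ?case by blast
qed



lemma gauss_R: "((\<lambda>y::real. exp (- y\<^sup>2)) has_integral sqrt pi) UNIV"
proof -
  have "has_bochner_integral lborel (\<lambda>x::real. exp (- x\<^sup>2)) (2 *\<^sub>R (sqrt pi / 2))"
    by (rule has_bochner_integral_even_function[OF gaussian_moment_0]) simp
  then have i: "integrable lborel (\<lambda>x::real. exp (- x\<^sup>2))" and e: "integral\<^sup>L lborel (\<lambda>x::real. exp (- x\<^sup>2)) = sqrt pi"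
    by (auto intro: integrable.intros dest: has_bochner_integral_integral_eq)
  show ?thesis using has_integral_integral_lborel[OF i] unfolding e .
qed

lemma gauss_half: "((\<lambda>y::real. exp (- y\<^sup>2)) has_integral sqrt pi / 2) {0<..}"
proof -
  have i: "integrable lborel (\<lambda>x::real. indicator {0..} x *\<^sub>R exp (- x\<^sup>2))"
    and e: "integral\<^sup>L lborel (\<lambda>x::real. indicator {0..} x *\<^sub>R exp (- x\<^sup>2)) = sqrt pi / 2"
    using gaussian_moment_0 by (auto intro: integrable.intros dest: has_bochner_integral_integral_eq)
  have "((\<lambda>x::real. indicator {0..} x *\<^sub>R exp (- x\<^sup>2)) has_integral sqrt pi / 2) UNIV"
    using has_integral_integral_lborel[OF i] unfolding e .
  then have "((\<lambda>x::real. if x \<in> {0..} then exp (- x\<^sup>2) else 0) has_integral sqrt pi / 2) UNIV"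
    by (rule has_integral_eq[rotated]) (auto simp: indicator_def)
  then have 1: "((\<lambda>x::real. exp (- x\<^sup>2)) has_integral sqrt pi / 2) {0..}"
    by (simp only: has_integral_restrict_UNIV)
  have n1: "negligible {x \<in> {0..} - {0<..}. exp (- x\<^sup>2) \<noteq> (0::real)}"
    by (rule negligible_subset[of "{0}"]) auto
  have n2: "negligible {x \<in> {0<..} - {0..}. exp (- x\<^sup>2) \<noteq> (0::real)}"
    by (rule negligible_subset[of "{}"]) auto
  show ?thesis using has_integral_spike_set_eq[OF n1 n2] 1 by blast
qed

lemma Sleb: "{0<..} \<in> sets (lebesgue :: real measure)"
  by simp

lemma abs_int_has_integral:
  fixes f :: "real \<Rightarrow> real"
  assumes "f absolutely_integrable_on S" "integral S f = I"
  shows "(f has_integral I) S"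
proof -
  from assms(1) have "f integrable_on S" using absolutely_integrable_on_def by blast
  from integrable_integral[OF this] assms(2) show ?thesis by simp
qed

lemma subord_pos:
  fixes \<alpha> \<beta> :: real
  assumes a: "\<alpha> > 0" and b: "\<beta> > 0"
  shows "((\<lambda>u. exp (- (\<alpha> * u)\<^sup>2 - (\<beta> / u)\<^sup>2)) has_integral sqrt pi * exp (- 2 * \<alpha> * \<beta>) / (2 * \<alpha>)) {0<..}"
proof -
  let ?S = "{0<..} :: real set"
  define h where "h = (\<lambda>u::real. exp (- (\<alpha> * u)\<^sup>2 - (\<beta> / u)\<^sup>2))"
  define g where "g = (\<lambda>u::real. \<alpha> * u - \<beta> / u)"
  have der: "(g has_field_derivative (\<alpha> + \<beta> / u\<^sup>2)) (at u within ?S)" if "u \<in> ?S" for u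
    using that unfolding g_def
    by (auto intro!: derivative_eq_intros simp: power2_eq_square field_simps)
  have mono: "g u1 < g u2" if "0 < u1" "u1 < u2" for u1 u2
  proof -
    have "\<alpha> * u1 < \<alpha> * u2" using a that by simp
    moreover have "\<beta> / u2 < \<beta> / u1" using b that by (simp add: divide_strict_left_mono)
    ultimately show ?thesis by (simp add: g_def)
  qed
  have inj: "inj_on g ?S"
  proof (rule inj_onI)
    fix u1 u2 assume "u1 \<in> ?S" "u2 \<in> ?S" "g u1 = g u2"
    then show "u1 = u2" by (cases u1 u2 rule: linorder_cases) (auto dest: mono)
  qed
  have img: "g ` ?S = UNIV"
  proof (intro set_eqI iffI)
    fix y :: real
    define D where "D = sqrt (y\<^sup>2 + 4 * \<alpha> * \<beta>)"
    have D2: "D\<^sup>2 = y\<^sup>2 + 4 * \<alpha> * \<beta>" unfolding D_def using a b by simp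
    have "sqrt (y\<^sup>2) < D" unfolding D_def using a b by (intro real_sqrt_less_mono) simp
    then have "\<bar>y\<bar> < D" by simp
    then have Dy: "0 < y + D" by linarith
    define u where "u = (y + D) / (2 * \<alpha>)"
    have u: "u > 0" using Dy a by (simp add: u_def)
    have "\<alpha> * u * u - y * u = (D * D - y * y) / (4 * \<alpha>)"
      unfolding u_def using a by (simp add: field_simps)
    also have "\<dots> = \<beta>" using D2 a by (simp add: power2_eq_square)
    finally have "\<alpha> * u * u - y * u = \<beta>" .
    then have "g u = y" unfolding g_def using u by (simp add: field_simps)
    then show "y \<in> g ` ?S" using u by force
  qed simp
  have gint: "(\<lambda>y::real. exp (- y\<^sup>2)) absolutely_integrable_on UNIV"
    using gauss_R by (intro nonnegative_absolutely_integrable_1) auto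
  have "(\<lambda>u. \<bar>\<alpha> + \<beta> / u\<^sup>2\<bar> * exp (- (g u)\<^sup>2)) absolutely_integrable_on ?S \<and>
        integral ?S (\<lambda>u. \<bar>\<alpha> + \<beta> / u\<^sup>2\<bar> * exp (- (g u)\<^sup>2)) = sqrt pi"
    using has_absolute_integral_change_of_variables_1'[OF Sleb der inj, of "\<lambda>y. exp (- y\<^sup>2)" "sqrt pi"]
      img gint gauss_R by (simp add: integral_unique)
  then have F0: "((\<lambda>u. \<bar>\<alpha> + \<beta> / u\<^sup>2\<bar> * exp (- (g u)\<^sup>2)) has_integral sqrt pi) ?S"
    using abs_int_has_integral by blast
  have geq: "exp (- (g u)\<^sup>2) = exp (2 * \<alpha> * \<beta>) * h u" if "u > 0" for u
  proof -
    have "- (g u)\<^sup>2 = 2 * \<alpha> * \<beta> + (- (\<alpha> * u)\<^sup>2 - (\<beta> / u)\<^sup>2)"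
      unfolding g_def using that by (simp add: power2_eq_square field_simps)
    then show ?thesis unfolding h_def by (simp add: exp_add)
  qed
  define F where "F = (\<lambda>u. (\<alpha> + \<beta> / u\<^sup>2) * h u)"
  have F: "(F has_integral sqrt pi * exp (- 2 * \<alpha> * \<beta>)) ?S"
  proof -
    note hi = has_integral_mult_right[OF F0, of "exp (- 2 * \<alpha> * \<beta>)"]
    have eqs: "exp (- 2 * \<alpha> * \<beta>) * (\<bar>\<alpha> + \<beta> / u\<^sup>2\<bar> * exp (- (g u)\<^sup>2)) = F u" if "u \<in> ?S" for u
    proof -
      have "\<bar>\<alpha> + \<beta> / u\<^sup>2\<bar> = \<alpha> + \<beta> / u\<^sup>2" using a b that by simp
      then show ?thesis using that geq[of u] by (simp add: F_def exp_add[symmetric])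
    qed
    from has_integral_eq[OF eqs hi] have "(F has_integral exp (- 2 * \<alpha> * \<beta>) * sqrt pi) ?S" by simp
    then show ?thesis by (simp only: mult.commute)
  qed
  have hcont: "continuous_on ?S h" unfolding h_def by (intro continuous_intros) auto
  have hint: "h absolutely_integrable_on ?S"
  proof (rule measurable_bounded_by_integrable_imp_absolutely_integrable[OF continuous_imp_measurable_on_sets_lebesgue[OF hcont Sleb] Sleb])
    have "((\<lambda>u. (1 / \<alpha>) * F u) has_integral (1 / \<alpha>) * (sqrt pi * exp (- 2 * \<alpha> * \<beta>))) ?S"
      by (rule has_integral_mult_right[OF F])
    then have "((\<lambda>u. F u / \<alpha>) has_integral (1 / \<alpha>) * (sqrt pi * exp (- 2 * \<alpha> * \<beta>))) ?S" by simp
    then show "(\<lambda>u. F u / \<alpha>) integrable_on ?S" unfolding integrable_on_def by blast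
    fix u :: real assume u: "u \<in> ?S"
    have "h u \<le> F u / \<alpha>" using a b u by (simp add: F_def h_def field_simps)
    then show "norm (h u) \<le> F u / \<alpha>" by (simp add: h_def)
  qed
  define I where "I = integral ?S h"
  have hI: "(h has_integral I) ?S" using hint unfolding I_def by (rule abs_int_has_integral) simp
  define g2 where "g2 = (\<lambda>u::real. \<beta> / (\<alpha> * u))"
  have der2: "(g2 has_field_derivative (- \<beta> / (\<alpha> * u\<^sup>2))) (at u within ?S)" if "u \<in> ?S" for u
    using that a unfolding g2_def
    by (auto intro!: derivative_eq_intros simp: power2_eq_square field_simps)
  have inj2: "inj_on g2 ?S" unfolding g2_def using a b by (auto intro!: inj_onI simp: field_simps)
  have img2: "g2 ` ?S = ?S"
  proof (intro set_eqI iffI)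
    fix v assume "v \<in> g2 ` ?S" then show "v \<in> ?S" using a b by (auto simp: g2_def)
  next
    fix v :: real assume v: "v \<in> ?S"
    then have "g2 (\<beta> / (\<alpha> * v)) = v" "\<beta> / (\<alpha> * v) \<in> ?S" using a b by (auto simp: g2_def)
    then show "v \<in> g2 ` ?S" by force
  qed
  have "(\<lambda>u. \<bar>- \<beta> / (\<alpha> * u\<^sup>2)\<bar> * h (g2 u)) absolutely_integrable_on ?S \<and>
        integral ?S (\<lambda>u. \<bar>- \<beta> / (\<alpha> * u\<^sup>2)\<bar> * h (g2 u)) = I"
    using has_absolute_integral_change_of_variables_1'[OF Sleb der2 inj2, of h I] img2 hint
    by (simp add: I_def)
  then have H2: "((\<lambda>u. \<bar>- \<beta> / (\<alpha> * u\<^sup>2)\<bar> * h (g2 u)) has_integral I) ?S"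
    using abs_int_has_integral by blast
  have H2': "((\<lambda>u. \<beta> / u\<^sup>2 * h u) has_integral \<alpha> * I) ?S"
  proof -
    note hi = has_integral_mult_right[OF H2, of \<alpha>]
    have eqs: "\<alpha> * (\<bar>- \<beta> / (\<alpha> * u\<^sup>2)\<bar> * h (g2 u)) = \<beta> / u\<^sup>2 * h u" if "u \<in> ?S" for u
    proof -
      have "h (g2 u) = h u" using a b that unfolding h_def g2_def
        by (simp add: power2_eq_square field_simps)
      moreover have "\<bar>- \<beta> / (\<alpha> * u\<^sup>2)\<bar> = \<beta> / (\<alpha> * u\<^sup>2)" using a b that by simp
      ultimately show ?thesis using a b by simp
    qed
    from has_integral_eq[OF eqs hi] show ?thesis .
  qed
  have "(F has_integral \<alpha> * I + \<alpha> * I) ?S"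
  proof -
    have "((\<lambda>u. \<alpha> * h u + \<beta> / u\<^sup>2 * h u) has_integral \<alpha> * I + \<alpha> * I) ?S"
      by (intro has_integral_add has_integral_mult_right hI H2')
    then show ?thesis by (simp add: F_def distrib_right)
  qed
  from has_integral_unique[OF F this] have "sqrt pi * exp (- 2 * \<alpha> * \<beta>) = 2 * \<alpha> * I" by simp
  then have "I = sqrt pi * exp (- 2 * \<alpha> * \<beta>) / (2 * \<alpha>)" using a by (simp add: field_simps)
  then show ?thesis using hI unfolding h_def by simp
qed

lemma subord_zero:
  fixes \<alpha> :: real
  assumes a: "\<alpha> > 0"
  shows "((\<lambda>u. exp (- (\<alpha> * u)\<^sup>2 - (0 / u)\<^sup>2)) has_integral sqrt pi / (2 * \<alpha>)) {0<..}"
proof -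
  let ?S = "{0<..} :: real set"
  have der: "((\<lambda>u. \<alpha> * u) has_field_derivative \<alpha>) (at u within ?S)" for u
    by (auto intro!: derivative_eq_intros)
  have inj: "inj_on (\<lambda>u. \<alpha> * u) ?S" using a by (auto intro!: inj_onI)
  have img: "(\<lambda>u. \<alpha> * u) ` ?S = ?S"
  proof (intro set_eqI iffI)
    fix v assume "v \<in> (\<lambda>u. \<alpha> * u) ` ?S" then show "v \<in> ?S" using a by auto
  next
    fix v :: real assume v: "v \<in> ?S"
    then have "\<alpha> * (v / \<alpha>) = v" "v / \<alpha> \<in> ?S" using a by auto
    then show "v \<in> (\<lambda>u. \<alpha> * u) ` ?S" by force
  qed
  have gint: "(\<lambda>y::real. exp (- y\<^sup>2)) absolutely_integrable_on ?S"
    using gauss_half by (intro nonnegative_absolutely_integrable_1) auto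
  have "(\<lambda>u. \<bar>\<alpha>\<bar> * exp (- (\<alpha> * u)\<^sup>2)) absolutely_integrable_on ?S \<and>
        integral ?S (\<lambda>u. \<bar>\<alpha>\<bar> * exp (- (\<alpha> * u)\<^sup>2)) = sqrt pi / 2"
    using has_absolute_integral_change_of_variables_1'[OF Sleb der inj, of "\<lambda>y. exp (- y\<^sup>2)" "sqrt pi / 2"]
      img gint gauss_half by (simp add: integral_unique)
  then have "((\<lambda>u. \<bar>\<alpha>\<bar> * exp (- (\<alpha> * u)\<^sup>2)) has_integral sqrt pi / 2) ?S"
    using abs_int_has_integral by blast
  then have "((\<lambda>u. \<alpha> * exp (- (\<alpha> * u)\<^sup>2)) has_integral sqrt pi / 2) ?S"
    using a by simp
  then have "((\<lambda>u. (1 / \<alpha>) * (\<alpha> * exp (- (\<alpha> * u)\<^sup>2))) has_integral (1 / \<alpha>) * (sqrt pi / 2)) ?S"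
    by (rule has_integral_mult_right)
  then show ?thesis using a by (simp add: mult.commute)
qed

lemma laplace_mix:
  fixes t r :: real
  assumes t: "t > 0" and r: "r \<ge> 0"
  shows "((\<lambda>u. exp (- (t / 2 * u)\<^sup>2 - (r / u)\<^sup>2)) has_integral sqrt pi * exp (- t * r) / t) {0<..}"
proof (cases "r = 0")
  case True
  then show ?thesis using subord_zero[of "t/2"] t by simp
next
  case False
  then have "r > 0" using r by simp
  then show ?thesis using subord_pos[of "t/2" r] t by simp
qed


lemma exp_sq_lim:
  fixes d :: real
  assumes d: "d > 0"
  shows "((\<lambda>u. exp (- (d / u)\<^sup>2)) \<longlongrightarrow> 0) (at_right 0)"
proof -
  have "LIM u at_right (0::real). d * inverse u :> at_top"
    by (rule filterlim_tendsto_pos_mult_at_top[OF tendsto_const d filterlim_inverse_at_top_right])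
  then have "LIM u at_right (0::real). (d / u) ^ 2 :> at_top"
    by (intro filterlim_pow_at_top) (simp_all add: divide_inverse)
  then have "LIM u at_right (0::real). - ((d / u) ^ 2) :> at_bot"
    by (simp add: filterlim_uminus_at_top)
  from filterlim_compose[OF exp_at_bot this] show ?thesis by simp
qed

lemma laplace_pd:
  fixes A :: "'a::euclidean_space set"
  assumes fin: "finite A" and t: "t > 0" and nz: "\<exists>x\<in>A. v x \<noteq> 0"
  shows "0 < (\<Sum>x\<in>A. \<Sum>y\<in>A. v x * v y * exp (- t * norm (x - y)))"
proof -
  define G where "G = (\<lambda>u::real. \<Sum>x\<in>A. \<Sum>y\<in>A. v x * v y * exp (- (norm (x - y) / u)\<^sup>2))"
  define P where "P = (\<Sum>x\<in>A. v x * v x)"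
  have P: "P > 0"
  proof -
    from nz obtain x0 where x0: "x0 \<in> A" "v x0 \<noteq> 0" by blast
    have "0 < v x0 * v x0" using x0(2) not_real_square_gt_zero by blast
    also have "v x0 * v x0 \<le> P" unfolding P_def
      using fin x0 by (intro member_le_sum) auto
    finally show ?thesis .
  qed
  have Gnn: "G u \<ge> 0" if "u > 0" for u
  proof -
    have "exp (- (norm (x - y) / u)\<^sup>2) = exp (- (1 / u\<^sup>2) * (norm (x - y))\<^sup>2)" for x y :: 'a
      by (simp add: power_divide)
    then show ?thesis unfolding G_def using gauss_psd[OF fin, of "1 / u\<^sup>2" v] by simp
  qed
  have lim: "(G \<longlongrightarrow> (\<Sum>x\<in>A. \<Sum>y\<in>A. v x * v y * (if x = y then 1 else 0))) (at_right 0)"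
    unfolding G_def
  proof (intro tendsto_sum tendsto_mult_left)
    fix x y assume "x \<in> A" "y \<in> A"
    show "((\<lambda>u. exp (- (norm (x - y) / u)\<^sup>2)) \<longlongrightarrow> (if x = y then 1 else 0)) (at_right 0)"
    proof (cases "x = y")
      case True then show ?thesis by simp
    next
      case False then have "norm (x - y) > 0" by simp
      from exp_sq_lim[OF this] False show ?thesis by simp
    qed
  qed
  have "(\<Sum>x\<in>A. \<Sum>y\<in>A. v x * v y * (if x = y then 1 else 0)) = P"
    unfolding P_def using fin by (simp add: if_distrib cong: if_cong)
  with lim have lim': "(G \<longlongrightarrow> P) (at_right 0)" by simp
  have "eventually (\<lambda>u. P / 2 < G u) (at_right 0)"
    using order_tendstoD(1)[OF lim', of "P / 2"] P by linarith
  then obtain \<delta> where \<delta>: "\<delta> > 0" and \<delta>G: "\<And>u. 0 < u \<Longrightarrow> u < \<delta> \<Longrightarrow> P / 2 < G u"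
    unfolding eventually_at_right_field by auto
  define d where "d = \<delta> / 2"
  have d: "0 < d" "d < \<delta>" using \<delta> by (auto simp: d_def)
  define c where "c = exp (- (t / 2 * d)\<^sup>2) * (P / 2)"
  have c: "c > 0" using P by (simp add: c_def)
  define f where "f = (\<lambda>u. \<Sum>x\<in>A. \<Sum>y\<in>A. v x * v y * exp (- (t / 2 * u)\<^sup>2 - (norm (x - y) / u)\<^sup>2))"
  define Q where "Q = (\<Sum>x\<in>A. \<Sum>y\<in>A. v x * v y * exp (- t * norm (x - y)))"
  have fint: "(f has_integral (sqrt pi / t) * Q) {0<..}"
  proof -
    have "(f has_integral (\<Sum>x\<in>A. \<Sum>y\<in>A. v x * v y * (sqrt pi * exp (- t * norm (x - y)) / t))) {0<..}"
      unfolding f_def using fin t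
      by (intro has_integral_sum has_integral_mult_right laplace_mix) auto
    moreover have "(\<Sum>x\<in>A. \<Sum>y\<in>A. v x * v y * (sqrt pi * exp (- t * norm (x - y)) / t)) = (sqrt pi / t) * Q"
      unfolding Q_def by (simp add: sum_distrib_left mult_ac)
    ultimately show ?thesis by simp
  qed
  have fG: "f u = exp (- (t / 2 * u)\<^sup>2) * G u" for u
  proof -
    have ee: "exp (- a - b) = exp (- a) * exp (- b)" for a b :: real
      by (simp add: exp_diff exp_minus divide_inverse)
    have "f u = (\<Sum>x\<in>A. \<Sum>y\<in>A. exp (- (t / 2 * u)\<^sup>2) * (v x * v y * exp (- (norm (x - y) / u)\<^sup>2)))"
      unfolding f_def ee by (simp only: mult_ac)
    also have "\<dots> = exp (- (t / 2 * u)\<^sup>2) * G u"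
      unfolding G_def by (simp only: sum_distrib_left)
    finally show ?thesis .
  qed
  define L where "L = (\<lambda>u::real. if u \<in> {0<..<d} then c else 0)"
  have Lint: "(L has_integral c * d) {0<..}"
  proof -
    have "((\<lambda>u::real. c) has_integral c * d) {0..d}"
      using has_integral_const_real[of c 0 d] d by (simp add: mult.commute)
    then have "((\<lambda>u::real. c) has_integral c * d) {0<..<d}"
      by (simp add: has_integral_Icc_iff_Ioo)
    then show ?thesis unfolding L_def by (subst has_integral_restrict) auto
  qed
  have le: "L u \<le> f u" if u: "u \<in> {0<..}" for u
  proof (cases "u < d")
    case True
    have "(t / 2 * u)\<^sup>2 \<le> (t / 2 * d)\<^sup>2" using u True t by (intro power_mono) auto
    then have e: "exp (- (t / 2 * d)\<^sup>2) \<le> exp (- (t / 2 * u)\<^sup>2)" by simp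
    have "P / 2 \<le> G u" using \<delta>G[of u] u True d by auto
    then have "c \<le> exp (- (t / 2 * u)\<^sup>2) * G u" unfolding c_def
      using e P by (intro mult_mono) auto
    then show ?thesis using True u by (simp add: L_def fG)
  next
    case False
    then show ?thesis using u Gnn[of u] by (simp add: L_def fG)
  qed
  have "c * d \<le> (sqrt pi / t) * Q"
    by (rule has_integral_le[OF Lint fint le])
  moreover have "c * d > 0" using c d by simp
  ultimately have h: "0 < (sqrt pi / t) * Q" by linarith
  have "0 < sqrt pi / t" using t by simp
  from zero_less_mult_pos[OF h this] show ?thesis unfolding Q_def .
qed


lemma weighting_unique_aux:
  fixes A :: "'a::euclidean_space set"
  assumes fin: "finite A" and t: "t > 0"
    and w1: "\<forall>x\<in>A. (\<Sum>y\<in>A. exp (- t * norm (x - y)) * w1 y) = 1" "\<forall>x. x \<notin> A \<longrightarrow> w1 x = 0"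
    and w2: "\<forall>x\<in>A. (\<Sum>y\<in>A. exp (- t * norm (x - y)) * w2 y) = 1" "\<forall>x. x \<notin> A \<longrightarrow> w2 x = 0"
  shows "w1 = w2"
proof (rule ccontr)
  assume ne: "w1 \<noteq> w2"
  define d where "d = (\<lambda>x. w1 x - w2 x)"
  have "\<exists>x\<in>A. d x \<noteq> 0"
  proof (rule ccontr)
    assume "\<not> (\<exists>x\<in>A. d x \<noteq> 0)"
    then have "w1 x = w2 x" for x using w1(2) w2(2) by (cases "x \<in> A") (auto simp: d_def)
    with ne show False by auto
  qed
  from laplace_pd[OF fin t this]
  have pos: "0 < (\<Sum>x\<in>A. \<Sum>y\<in>A. d x * d y * exp (- t * norm (x - y)))" .
  have row: "(\<Sum>y\<in>A. exp (- t * norm (x - y)) * d y) = 0" if "x \<in> A" for x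
  proof -
    have "(\<Sum>y\<in>A. exp (- t * norm (x - y)) * d y)
        = (\<Sum>y\<in>A. exp (- t * norm (x - y)) * w1 y) - (\<Sum>y\<in>A. exp (- t * norm (x - y)) * w2 y)"
      unfolding d_def by (simp add: right_diff_distrib sum_subtractf)
    then show ?thesis using w1(1) w2(1) that by simp
  qed
  have "(\<Sum>x\<in>A. \<Sum>y\<in>A. d x * d y * exp (- t * norm (x - y)))
      = (\<Sum>x\<in>A. d x * (\<Sum>y\<in>A. exp (- t * norm (x - y)) * d y))"
    by (simp add: sum_distrib_left mult_ac)
  also have "\<dots> = 0" using row by simp
  finally show False using pos by simp
qed

lemma weighting_char:
  fixes A :: "'a::euclidean_space set"
  assumes fin: "finite A" and t: "t > 0"
  shows "(\<forall>x\<in>A. (\<Sum>y\<in>A. exp (- t * norm (x - y)) * weighting t A y) = 1) \<and> (\<forall>x. x \<notin> A \<longrightarrow> weighting t A x = 0)"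
proof -
  let ?K = "\<lambda>x y::'a. exp (- t * norm (x - y))"
  have sym: "\<forall>x\<in>A. \<forall>y\<in>A. ?K x y = ?K y x" by (simp add: norm_minus_commute)
  have pd: "\<forall>v. (\<exists>x\<in>A. v x \<noteq> 0) \<longrightarrow> 0 < (\<Sum>x\<in>A. \<Sum>y\<in>A. v x * v y * ?K x y)"
    using laplace_pd[OF fin t] by blast
  obtain w0 where w0: "\<forall>x\<in>A. (\<Sum>y\<in>A. ?K x y * w0 y) = 1"
    using solve_pd[OF fin sym pd, of "\<lambda>_. 1"] by blast
  define w where "w = (\<lambda>y. if y \<in> A then w0 y else 0)"
  have P: "(\<forall>x\<in>A. (\<Sum>y\<in>A. ?K x y * w y) = 1) \<and> (\<forall>x. x \<notin> A \<longrightarrow> w x = 0)"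
    using w0 by (simp add: w_def)
  have "weighting t A = w"
    unfolding weighting_def
  proof (rule the_equality)
    show "(\<forall>x\<in>A. (\<Sum>y\<in>A. ?K x y * w y) = 1) \<and> (\<forall>x. x \<notin> A \<longrightarrow> w x = 0)" by (rule P)
  next
    fix w' assume "(\<forall>x\<in>A. (\<Sum>y\<in>A. ?K x y * w' y) = 1) \<and> (\<forall>x. x \<notin> A \<longrightarrow> w' x = 0)"
    then show "w' = w" using P weighting_unique_aux[OF fin t] by blast
  qed
  with P show ?thesis by simp
qed

theorem lemmaB4:
  fixes X Z :: "'a::euclidean_space set" and t :: real
  assumes "t > 0" and "finite Z" and "X \<subseteq> Z"
  shows "Mag t Z = Mag t X \<longleftrightarrow> mag_equiv t X Z"
proof -
  note t = assms(1) and finZ = assms(2) and XZ = assms(3)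
  have finX: "finite X" using finite_subset[OF XZ finZ] .
  let ?K = "\<lambda>x y::'a. exp (- t * norm (x - y))"
  define wZ where "wZ = weighting t Z"
  define wX where "wX = weighting t X"
  have Z1: "\<forall>x\<in>Z. (\<Sum>y\<in>Z. ?K x y * wZ y) = 1" and Z0: "\<forall>x. x \<notin> Z \<longrightarrow> wZ x = 0"
    using weighting_char[OF finZ t] unfolding wZ_def by auto
  have X1: "\<forall>x\<in>X. (\<Sum>y\<in>X. ?K x y * wX y) = 1" and X0: "\<forall>x. x \<notin> X \<longrightarrow> wX x = 0"
    using weighting_char[OF finX t] unfolding wX_def by auto
  have MZ: "Mag t Z = (\<Sum>x\<in>Z. wZ x)" by (simp add: Mag_def wZ_def)
  have MX: "Mag t X = (\<Sum>x\<in>X. wX x)" by (simp add: Mag_def wX_def)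
  have MX': "(\<Sum>x\<in>Z. wX x) = Mag t X"
    unfolding MX using finZ XZ X0 by (intro sum.mono_neutral_right) auto
  define d where "d = (\<lambda>x. wZ x - wX x)"
  have zwX: "(\<Sum>y\<in>Z. ?K x y * wX y) = (\<Sum>y\<in>X. ?K x y * wX y)" for x
    using finZ XZ X0 by (intro sum.mono_neutral_right) auto
  have Qd: "(\<Sum>x\<in>Z. \<Sum>y\<in>Z. d x * d y * ?K x y) = Mag t Z - Mag t X"
  proof -
    have row: "(\<Sum>y\<in>Z. ?K x y * d y) = 1 - (\<Sum>y\<in>Z. ?K x y * wX y)" if "x \<in> Z" for x
    proof -
      have "(\<Sum>y\<in>Z. ?K x y * d y) = (\<Sum>y\<in>Z. ?K x y * wZ y) - (\<Sum>y\<in>Z. ?K x y * wX y)"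
        unfolding d_def by (simp add: right_diff_distrib sum_subtractf)
      then show ?thesis using Z1 that by simp
    qed
    have "(\<Sum>x\<in>Z. \<Sum>y\<in>Z. d x * d y * ?K x y) = (\<Sum>x\<in>Z. d x * (\<Sum>y\<in>Z. ?K x y * d y))"
      by (simp add: sum_distrib_left mult_ac)
    also have "\<dots> = (\<Sum>x\<in>Z. d x * (1 - (\<Sum>y\<in>Z. ?K x y * wX y)))"
      using row by simp
    also have "\<dots> = (\<Sum>x\<in>Z. d x) - (\<Sum>x\<in>Z. wZ x * (\<Sum>y\<in>Z. ?K x y * wX y)) + (\<Sum>x\<in>Z. wX x * (\<Sum>y\<in>Z. ?K x y * wX y))"
      unfolding d_def by (simp add: algebra_simps sum_subtractf sum.distrib)
    also have "(\<Sum>x\<in>Z. d x) = Mag t Z - Mag t X"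
      unfolding d_def MZ using MX' by (simp add: sum_subtractf)
    also have "(\<Sum>x\<in>Z. wZ x * (\<Sum>y\<in>Z. ?K x y * wX y)) = Mag t X"
    proof -
      have "(\<Sum>x\<in>Z. wZ x * (\<Sum>y\<in>Z. ?K x y * wX y)) = (\<Sum>y\<in>Z. wX y * (\<Sum>x\<in>Z. ?K y x * wZ x))"
      proof -
        have "(\<Sum>x\<in>Z. wZ x * (\<Sum>y\<in>Z. ?K x y * wX y)) = (\<Sum>x\<in>Z. \<Sum>y\<in>Z. wX y * (?K y x * wZ x))"
          unfolding sum_distrib_left by (intro sum.cong refl) (simp add: norm_minus_commute mult_ac)
        also have "\<dots> = (\<Sum>y\<in>Z. \<Sum>x\<in>Z. wX y * (?K y x * wZ x))" by (rule sum.swap)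
        also have "\<dots> = (\<Sum>y\<in>Z. wX y * (\<Sum>x\<in>Z. ?K y x * wZ x))" by (simp only: sum_distrib_left)
        finally show ?thesis .
      qed
      also have "\<dots> = (\<Sum>y\<in>Z. wX y)" using Z1 by (intro sum.cong refl) auto
      finally show ?thesis using MX' by simp
    qed
    also have "(\<Sum>x\<in>Z. wX x * (\<Sum>y\<in>Z. ?K x y * wX y)) = Mag t X"
    proof -
      have "(\<Sum>x\<in>Z. wX x * (\<Sum>y\<in>Z. ?K x y * wX y)) = (\<Sum>x\<in>Z. wX x)"
      proof (intro sum.cong refl)
        fix x assume "x \<in> Z"
        show "wX x * (\<Sum>y\<in>Z. ?K x y * wX y) = wX x"
        proof (cases "x \<in> X")
          case True then show ?thesis using X1 zwX by simp
        next
          case False then show ?thesis using X0 by simp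
        qed
      qed
      then show ?thesis using MX' by simp
    qed
    finally show ?thesis by simp
  qed
  have "Mag t Z = Mag t X \<longleftrightarrow> wZ = wX"
  proof
    assume eq: "Mag t Z = Mag t X"
    show "wZ = wX"
    proof (rule ccontr)
      assume ne: "wZ \<noteq> wX"
      have "\<exists>x\<in>Z. d x \<noteq> 0"
      proof (rule ccontr)
        assume "\<not> (\<exists>x\<in>Z. d x \<noteq> 0)"
        then have "wZ x = wX x" for x using Z0 X0 XZ by (cases "x \<in> Z") (auto simp: d_def)
        with ne show False by auto
      qed
      from laplace_pd[OF finZ t this] Qd eq show False by simp
    qed
  next
    assume "wZ = wX"
    then show "Mag t Z = Mag t X" using MZ MX' by simp
  qed
  also have "\<dots> \<longleftrightarrow> mag_equiv t X Z"
  proof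
    assume "wZ = wX"
    then show "mag_equiv t X Z" unfolding mag_equiv_def wZ_def[symmetric] wX_def[symmetric]
      using X0 XZ by auto
  next
    assume me: "mag_equiv t X Z"
    then have supp: "{x \<in> X. wX x \<noteq> 0} = {y \<in> Z. wZ y \<noteq> 0}"
      unfolding mag_equiv_def wZ_def wX_def .
    have wZ0: "\<forall>x. x \<notin> X \<longrightarrow> wZ x = 0"
    proof (intro allI impI)
      fix x assume "x \<notin> X"
      show "wZ x = 0"
      proof (rule ccontr)
        assume "wZ x \<noteq> 0"
        with Z0 have "x \<in> {y \<in> Z. wZ y \<noteq> 0}" by auto
        with supp \<open>x \<notin> X\<close> show False by auto
      qed
    qed
    have wZ1: "\<forall>x\<in>X. (\<Sum>y\<in>X. ?K x y * wZ y) = 1"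
    proof
      fix x assume x: "x \<in> X"
      have "(\<Sum>y\<in>X. ?K x y * wZ y) = (\<Sum>y\<in>Z. ?K x y * wZ y)"
        using finZ XZ wZ0 by (intro sum.mono_neutral_left) auto
      then show "(\<Sum>y\<in>X. ?K x y * wZ y) = 1" using Z1 x XZ by auto
    qed
    show "wZ = wX" using weighting_unique_aux[OF finX t wZ1 wZ0 X1 X0] .
  qed
  finally show ?thesis .
qed

end
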